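(* Let $(x_n)$ be a nonincreasing interval-filling sequence of positive reals with cardinal function $f$. Then $\mathrm{rng}(f)=\{1,2\}$ if and only if there exists $c>0$ such that $x_n=c/2^n$ for every $n\in\mathbb{N}$.
   Context: For a summable sequence $\mathbf{x}=(x_n)$ of positive reals, $\mathcal{A}(\mathbf{x})=\{\sum_{n\in A}x_n: A\subseteq\mathbb{N}\}$ is its achievement set and its cardinal function $f$ assigns to $x\in\mathcal{A}(\mathbf{x})$ the cardinality (a positive integer, $\omega$, or $\mathfrak{c}$) of $\{(\varepsilon_n)\in\{0,1\}^{\mathbb{N}}:\sum\varepsilon_nx_n=x\}$. The sequence is interval-filling if $\mathcal{A}(\mathbf{x})$ is an interval. *)

theory Defs
  imports "HOL-Analysis.Analysis" "HOL-Library.Extended_Nat"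
begin

text \<open>Subsums: the sum of x over an index set A (a 0/1 sequence is identified with
  the set of indices where it equals 1).\<close>
definition representations :: "(nat \<Rightarrow> real) \<Rightarrow> real \<Rightarrow> nat set set" where
  "representations x p = {A. (\<lambda>n. if n \<in> A then x n else 0) sums p}"

definition achievement_set :: "(nat \<Rightarrow> real) \<Rightarrow> real set" where
  "achievement_set x = {p. \<exists>A. (\<lambda>n. if n \<in> A then x n else 0) sums p}"

text \<open>Cardinal function; infinite cardinalities (omega, continuum) are collapsed to
  \<infinity>, which is harmless for statements about finite values.\<close>
definition cardinal_function :: "(nat \<Rightarrow> real) \<Rightarrow> real \<Rightarrow> enat" where
  "cardinal_function x p =
     (if finite (representations x p) then enat (card (representations x p)) else \<infinity>)"

definition interval_filling :: "(nat \<Rightarrow> real) \<Rightarrow> bool" where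
  "interval_filling x \<longleftrightarrow> is_interval (achievement_set x)"

end

theory Submission
  imports Defs
begin


definition ind :: "(nat \<Rightarrow> real) \<Rightarrow> nat set \<Rightarrow> nat \<Rightarrow> real" where
  "ind x A n = (if n \<in> A then x n else 0)"
definition ss :: "(nat \<Rightarrow> real) \<Rightarrow> nat set \<Rightarrow> real" where
  "ss x A = suminf (ind x A)"

locale posseq =
  fixes x :: "nat \<Rightarrow> real"
  assumes pos: "\<And>n. x n > 0" and summ: "summable x"
begin

lemma ind_summable: "summable (ind x A)"
  by (rule summable_comparison_test[OF _ summ]) (auto simp: ind_def less_imp_le[OF pos])

lemma ind_sums: "ind x A sums ss x A"
  unfolding ss_def using ind_summable by (rule summable_sums)

lemma rep_iff: "A \<in> representations x p \<longleftrightarrow> ss x A = p"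
  unfolding representations_def ind_def[symmetric, abs_def]
  using ind_sums sums_unique by (metis mem_Collect_eq)

lemma ach: "achievement_set x = range (ss x)"
  unfolding achievement_set_def ind_def[symmetric, abs_def]
proof (intro set_eqI iffI)
  fix p assume "p \<in> {p. \<exists>A. ind x A sums p}"
  then obtain A where "ind x A sums p" by auto
  then have "p = ss x A" using ind_sums sums_unique2 by blast
  then show "p \<in> range (ss x)" by auto
next
  fix p assume "p \<in> range (ss x)"
  then show "p \<in> {p. \<exists>A. ind x A sums p}" using ind_sums by auto
qed

lemma ss_nonneg: "0 \<le> ss x A"
  unfolding ss_def by (rule suminf_nonneg[OF ind_summable]) (auto simp: ind_def less_imp_le[OF pos])

lemma ss_mono: "A \<subseteq> B \<Longrightarrow> ss x A \<le> ss x B"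
  unfolding ss_def by (rule suminf_le[OF _ ind_summable ind_summable]) (auto simp: ind_def less_imp_le[OF pos])

lemma ss_union: "A \<inter> B = {} \<Longrightarrow> ss x (A \<union> B) = ss x A + ss x B"
proof -
  assume "A \<inter> B = {}"
  then have "ind x (A \<union> B) = (\<lambda>n. ind x A n + ind x B n)"
    by (auto simp: ind_def fun_eq_iff)
  then show ?thesis unfolding ss_def using suminf_add[OF ind_summable ind_summable] by simp
qed

lemma ss_split: "ss x A = ss x (A \<inter> S) + ss x (A - S)"
proof -
  have "ss x ((A \<inter> S) \<union> (A - S)) = ss x (A \<inter> S) + ss x (A - S)" by (rule ss_union) auto
  moreover have "(A \<inter> S) \<union> (A - S) = A" by auto
  ultimately show ?thesis by simp
qed

lemma ss_finite: "finite A \<Longrightarrow> ss x A = sum x A"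
proof -
  assume f: "finite A"
  have "ind x A sums (\<Sum>n\<in>A. ind x A n)"
    by (rule sums_finite[OF f]) (auto simp: ind_def)
  moreover have "(\<Sum>n\<in>A. ind x A n) = sum x A" by (auto simp: ind_def)
  ultimately show ?thesis unfolding ss_def by (simp add: sums_iff)
qed

lemma ss_single: "ss x {k} = x k"
  using ss_finite by simp

lemma ss_ge: "a \<in> A \<Longrightarrow> x a \<le> ss x A"
  using ss_mono[of "{a}" A] ss_single by auto

lemma ss_zero: "ss x A = 0 \<Longrightarrow> A = {}"
  using ss_ge pos by (metis all_not_in_conv not_less)

lemma x_lim: "x \<longlonglongrightarrow> 0"
  by (rule summable_LIMSEQ_zero[OF summ])


lemma gap:
  assumes dec: "decseq x" and fill: "interval_filling x"
  shows "x n \<le> ss x {n<..}"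
proof (rule ccontr)
  assume "\<not> ?thesis"
  then have lt: "ss x {n<..} < x n" by simp
  define t where "t = (ss x {n<..} + x n) / 2"
  have iv: "is_interval (range (ss x))" using fill ach unfolding interval_filling_def by simp
  have "0 \<le> t" "t \<le> x n" using lt ss_nonneg[of "{n<..}"] unfolding t_def by auto
  moreover have "0 \<in> range (ss x)" using rangeI[of "ss x" "{}"] ss_finite[of "{}"] by simp
  moreover have "x n \<in> range (ss x)" using rangeI[of "ss x" "{n}"] ss_single[of n] by simp
  ultimately have "t \<in> range (ss x)" using iv[unfolded is_interval_1] by blast
  then obtain A where A: "ss x A = t" by auto
  show False
  proof (cases "\<exists>k\<in>A. k \<le> n")
    case True
    then obtain k where "k \<in> A" "k \<le> n" by auto
    then have "x n \<le> ss x A" using ss_ge decseqD[OF dec] by (meson order_trans)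
    then show False using A lt unfolding t_def by simp
  next
    case False
    then have "A \<subseteq> {n<..}" by auto
    then have "ss x A \<le> ss x {n<..}" by (rule ss_mono)
    then show False using A lt unfolding t_def by simp
  qed
qed

lemma greedy:
  assumes H: "\<And>k. m \<le> k \<Longrightarrow> x k \<le> ss x {k<..}"
    and q0: "0 \<le> q" and qle: "q \<le> ss x {m..}"
  shows "\<exists>A\<subseteq>{m..}. ss x A = q"
proof -
  define s where "s = rec_nat 0 (\<lambda>n v. if m \<le> n \<and> v + x n \<le> q then v + x n else v)"
  have s0: "s 0 = 0" and sS: "\<And>n. s (Suc n) = (if m \<le> n \<and> s n + x n \<le> q then s n + x n else s n)"
    unfolding s_def by simp_all
  define A where "A = {n. m \<le> n \<and> s n + x n \<le> q}"
  have Am: "A \<subseteq> {m..}" unfolding A_def by auto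
  have sA: "s n = sum x (A \<inter> {..<n})" for n
  proof (induction n)
    case 0 then show ?case using s0 by simp
  next
    case (Suc n)
    show ?case
    proof (cases "n \<in> A")
      case True
      then have "A \<inter> {..<Suc n} = insert n (A \<inter> {..<n})" by auto
      then show ?thesis using True Suc sS[of n] unfolding A_def by simp
    next
      case False
      then have "A \<inter> {..<Suc n} = A \<inter> {..<n}" by (auto simp: less_Suc_eq)
      moreover have "s (Suc n) = s n" using False sS[of n] unfolding A_def by auto
      ultimately show ?thesis using Suc by simp
    qed
  qed
  have sq: "s n \<le> q" for n
    by (induction n) (auto simp: s0 sS q0)
  have sss: "s n = ss x (A \<inter> {..<n})" for n using sA ss_finite by simp
  have ssle: "ss x A \<le> q"
  proof -
    have "sum (ind x A) {..<n} = s n" for n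
      unfolding sA by (simp add: ind_def sum.If_cases Int_commute)
    then show ?thesis unfolding ss_def using suminf_le_const[OF ind_summable] sq by metis
  qed
  have "ss x A = q"
  proof (rule ccontr)
    assume "ss x A \<noteq> q"
    then have lt: "ss x A < q" using ssle by simp
    have "\<forall>\<^sub>F n in sequentially. x n < q - ss x A"
      using order_tendstoD(2)[OF x_lim] lt by simp
    then obtain N where N: "\<And>n. n \<ge> N \<Longrightarrow> x n < q - ss x A"
      unfolding eventually_sequentially by auto
    have allA: "n \<in> A" if "n \<ge> max N m" for n
    proof (rule ccontr)
      assume "n \<notin> A"
      then have "q < s n + x n" using that unfolding A_def by auto
      moreover have "s n \<le> ss x A" using sss ss_mono by simp
      moreover have "x n < q - ss x A" using N that by simp
      ultimately show False by simp
    qed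
    define E where "E = {n. m \<le> n \<and> n \<notin> A}"
    have "E \<subseteq> {..<max N m}" using allA unfolding E_def by (force simp: not_le[symmetric])
    then have Efin: "finite E" using finite_subset by blast
    show False
    proof (cases "E = {}")
      case True
      then have "A = {m..}" using Am unfolding E_def by auto
      then show False using lt qle by simp
    next
      case False
      define K where "K = Max E"
      have KE: "K \<in> E" unfolding K_def using Efin False by simp
      have Kmax: "n \<in> E \<Longrightarrow> n \<le> K" for n unfolding K_def using Efin by simp
      have sub: "{K<..} \<subseteq> A"
      proof
        fix n assume "n \<in> {K<..}"
        then have "n > K" by simp
        moreover have "m \<le> K" using KE unfolding E_def by simp
        ultimately show "n \<in> A" using Kmax[of n] unfolding E_def by fastforce
      qed
      have "q < s K + x K" using KE unfolding E_def A_def by auto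
      also have "\<dots> \<le> s K + ss x {K<..}" using H KE unfolding E_def by simp
      also have "\<dots> = ss x ((A \<inter> {..<K}) \<union> {K<..})"
      proof -
        have "A \<inter> {..<K} \<inter> {K<..} = {}" by auto
        then show ?thesis using ss_union[of "A \<inter> {..<K}" "{K<..}"] sss by simp
      qed
      also have "\<dots> \<le> ss x A" using sub by (intro ss_mono) auto
      finally show False using ssle by simp
    qed
  qed
  then show ?thesis using Am by blast
qed


lemma firstdiff_aux:
  assumes E: "\<And>k. x k = ss x {k<..}"
    and eq: "ss x A = ss x B" and nA: "n \<in> A" and nB: "n \<notin> B"
    and below: "\<And>k. k < n \<Longrightarrow> (k \<in> A) = (k \<in> B)"
  shows "finite A \<and> infinite B"
proof -
  define P where "P = A \<inter> {..<n}"
  have PB: "B \<inter> {..<n} = P" unfolding P_def using below by auto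
  have dA: "A = P \<union> ({n} \<union> (A \<inter> {n<..}))" unfolding P_def using nA
    by (auto simp: not_less_iff_gr_or_eq)
  have dB: "B = P \<union> (B \<inter> {n<..})" using PB nB by (auto simp: not_less_iff_gr_or_eq)
  have sA: "ss x A = ss x P + (x n + ss x (A \<inter> {n<..}))"
  proof -
    have "ss x A = ss x P + ss x ({n} \<union> (A \<inter> {n<..}))"
      by (subst dA, rule ss_union) (auto simp: P_def)
    also have "ss x ({n} \<union> (A \<inter> {n<..})) = ss x {n} + ss x (A \<inter> {n<..})"
      by (rule ss_union) auto
    finally show ?thesis using ss_single by simp
  qed
  have sB: "ss x B = ss x P + ss x (B \<inter> {n<..})"
    by (subst dB, rule ss_union) (auto simp: P_def)
  have le: "ss x (B \<inter> {n<..}) \<le> x n" using E[of n] ss_mono[of "B \<inter> {n<..}" "{n<..}"] by auto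
  have z: "ss x (A \<inter> {n<..}) = 0" and g: "ss x (B \<inter> {n<..}) = x n"
    using eq sA sB le ss_nonneg[of "A \<inter> {n<..}"] by auto
  have "A \<inter> {n<..} = {}" using ss_zero[OF z] .
  then have "A \<subseteq> {..n}" by (auto simp: not_less)
  then have fA: "finite A" using finite_subset by blast
  have "{n<..} \<subseteq> B"
  proof
    fix j assume j: "j \<in> {n<..}"
    show "j \<in> B"
    proof (rule ccontr)
      assume "j \<notin> B"
      then have "B \<inter> {n<..} \<subseteq> {n<..} - {j}" by auto
      then have "ss x (B \<inter> {n<..}) + x j \<le> ss x ({n<..} - {j}) + ss x {j}"
        using ss_mono ss_single by simp
      also have "\<dots> = ss x {n<..}"
        using ss_union[of "{n<..} - {j}" "{j}"] j by (simp add: insert_absorb)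
      finally show False using g E[of n] pos[of j] by simp
    qed
  qed
  then have "infinite B" using infinite_Ioi finite_subset by blast
  with fA show ?thesis by simp
qed

lemma firstdiff:
  assumes E: "\<And>k. x k = ss x {k<..}"
    and eq: "ss x A = ss x B" and ne: "A \<noteq> B"
  shows "(finite A \<and> infinite B) \<or> (infinite A \<and> finite B)"
proof -
  have "\<exists>k. (k \<in> A) \<noteq> (k \<in> B)" using ne by auto
  define n where "n = (LEAST k. (k \<in> A) \<noteq> (k \<in> B))"
  have d: "(n \<in> A) \<noteq> (n \<in> B)" unfolding n_def by (rule LeastI_ex) fact
  have below: "\<And>k. k < n \<Longrightarrow> (k \<in> A) = (k \<in> B)" unfolding n_def using not_less_Least by blast
  show ?thesis
  proof (cases "n \<in> A")
    case True
    then show ?thesis using firstdiff_aux[OF E eq True] d below by auto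
  next
    case False
    then have "n \<in> B" using d by auto
    then show ?thesis using firstdiff_aux[OF E eq[symmetric] \<open>n \<in> B\<close>] False below by auto
  qed
qed

lemma atmost2:
  assumes E: "\<And>k. x k = ss x {k<..}"
  shows "finite (representations x p) \<and> card (representations x p) \<le> 2"
proof -
  let ?R = "representations x p"
  have no3: False if "a \<in> ?R" "b \<in> ?R" "c \<in> ?R" "a \<noteq> b" "b \<noteq> c" "a \<noteq> c" for a b c
  proof -
    have "ss x a = p" "ss x b = p" "ss x c = p" using that rep_iff by auto
    then show False using firstdiff[OF E, of a b] firstdiff[OF E, of b c] firstdiff[OF E, of a c] that
      by auto
  qed
  show ?thesis
  proof (cases "?R = {}")
    case True then show ?thesis by simp
  next
    case False
    then obtain a where a: "a \<in> ?R" by auto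
    show ?thesis
    proof (cases "?R - {a} = {}")
      case True
      then have "?R = {a}" using a by auto
      then show ?thesis by simp
    next
      case False
      then obtain b where b: "b \<in> ?R" "b \<noteq> a" by auto
      have "?R \<subseteq> {a, b}" using no3 a b by blast
      then have fin: "finite ?R" using finite_subset by blast
      have "card ?R \<le> card {a, b}" by (rule card_mono) (simp_all add: \<open>?R \<subseteq> {a, b}\<close>)
      moreover have "card {a, b} \<le> 2" by (cases "a = b") auto
      ultimately show ?thesis using fin by simp
    qed
  qed
qed

end

lemma geom_tail:
  fixes c :: real
  shows "ss (\<lambda>n. c / 2 ^ n) {k<..} = c / 2 ^ k"
proof -
  let ?f = "ind (\<lambda>n. c / 2 ^ n) {k<..}"
  have "(\<lambda>j. ?f (j + Suc k)) = (\<lambda>j. (c / 2 ^ Suc k) * (1/2) ^ j)"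
    by (auto simp: ind_def fun_eq_iff power_add power_divide)
  moreover have "(\<lambda>j. (c / 2 ^ Suc k) * (1/2::real) ^ j) sums ((c / 2 ^ Suc k) * (1 / (1 - 1/2)))"
    by (rule sums_mult[OF geometric_sums]) simp
  moreover have "(c / 2 ^ Suc k) * (1 / (1 - 1/2)) = c / 2 ^ k" by simp
  ultimately have "(\<lambda>j. ?f (j + Suc k)) sums (c / 2 ^ k)" by simp
  then have "?f sums (c / 2 ^ k + (\<Sum>i<Suc k. ?f i))" by (simp only: sums_iff_shift)
  moreover have "(\<Sum>i<Suc k. ?f i) = 0" by (auto simp: ind_def)
  ultimately show ?thesis unfolding ss_def by (simp add: sums_iff)
qed


lemma cf_iff: "cardinal_function x p \<in> {1, 2} \<longleftrightarrow>
   finite (representations x p) \<and> card (representations x p) \<in> {1, 2}"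
  unfolding cardinal_function_def
  by (auto simp: one_enat_def numeral_eq_enat)

theorem corollary3p8:
  fixes x :: "nat \<Rightarrow> real"
  assumes pos: "\<And>n. x n > 0"
    and summ: "summable x"
    and noninc: "decseq x"
    and fill: "interval_filling x"
  shows "cardinal_function x ` achievement_set x = {1, 2}
         \<longleftrightarrow> (\<exists>c>0. \<forall>n. x n = c / 2 ^ n)"
proof -
  interpret posseq x using pos summ by unfold_locales
  have nonempty: "representations x p \<noteq> {}" if "p \<in> achievement_set x" for p
    using that ach rep_iff by auto
  show ?thesis
  proof
    assume img: "cardinal_function x ` achievement_set x = {1, 2}"
    have R2: "finite (representations x p) \<and> card (representations x p) \<le> 2"
      if "p \<in> achievement_set x" for p
    proof -
      have "cardinal_function x p \<in> {1, 2}" using img that by blast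
      then show ?thesis using cf_iff by auto
    qed
    have H: "x k \<le> ss x {k<..}" for k using gap[OF noninc fill] .
    have E: "x n = ss x {n<..}" for n
    proof (rule ccontr)
      assume "x n \<noteq> ss x {n<..}"
      then have lt: "x n < ss x {n<..}" using H[of n] by simp
      have "\<forall>\<^sub>F m in sequentially. x m < ss x {n<..} - x n"
        using order_tendstoD(2)[OF x_lim] lt by simp
      then obtain N where N: "\<And>m. m \<ge> N \<Longrightarrow> x m < ss x {n<..} - x n"
        unfolding eventually_sequentially by auto
      define m where "m = max N (Suc n)"
      have mn: "n < m" and xm: "x m < ss x {n<..} - x n" using N unfolding m_def by auto
      define p where "p = x n + x m"
      define A1 where "A1 = {n, m}"
      have s1: "ss x A1 = p" unfolding A1_def p_def using ss_finite mn by simp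
      have em: "{Suc m..} = {m<..}" by auto
      have en: "{Suc n..} = {n<..}" by auto
      have Hs: "\<And>j k. Suc j \<le> k \<Longrightarrow> x k \<le> ss x {k<..}" using H by blast
      obtain B where B: "B \<subseteq> {Suc m..}" "ss x B = x m"
        using greedy[of "Suc m" "x m", OF Hs[of m] less_imp_le[OF pos[of m]]] H[of m] em by auto
      define A2 where "A2 = insert n B"
      have "n \<notin> B" using B mn by auto
      then have s2: "ss x A2 = p" unfolding A2_def p_def
        using ss_union[of "{n}" B] B ss_single by simp
      obtain C where C: "C \<subseteq> {Suc n..}" "ss x C = p"
        using greedy[of "Suc n" p, OF Hs[of n]] lt xm less_imp_le[OF pos[of m]] less_imp_le[OF pos[of n]] en
        unfolding p_def by auto
      have d12: "A1 \<noteq> A2" using B unfolding A1_def A2_def using mn by auto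
      have d13: "A1 \<noteq> C" using C unfolding A1_def by auto
      have d23: "A2 \<noteq> C" using C unfolding A2_def by auto
      have sub: "{A1, A2, C} \<subseteq> representations x p" using s1 s2 C rep_iff by auto
      have pin: "p \<in> achievement_set x" using s1 ach by auto
      have "card {A1, A2, C} = 3" using d12 d13 d23 by simp
      moreover have "card {A1, A2, C} \<le> card (representations x p)"
        using card_mono[OF _ sub] R2[OF pin] by simp
      ultimately show False using R2[OF pin] by simp
    qed
    have rec: "x (Suc n) = x n / 2" for n
    proof -
      have "{n<..} = {Suc n} \<union> {Suc n<..}" by auto
      then have "ss x {n<..} = x (Suc n) + ss x {Suc n<..}"
        using ss_union[of "{Suc n}" "{Suc n<..}"] ss_single by simp
      then show ?thesis using E[of n] E[of "Suc n"] by simp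
    qed
    have "x n = x 0 / 2 ^ n" for n by (induction n) (auto simp: rec)
    then show "\<exists>c>0. \<forall>n. x n = c / 2 ^ n" using pos[of 0] by blast
  next
    assume "\<exists>c>0. \<forall>n. x n = c / 2 ^ n"
    then obtain c where c: "c > 0" "\<And>n. x n = c / 2 ^ n" by auto
    have xe: "x = (\<lambda>n. c / 2 ^ n)" using c by auto
    have E: "x k = ss x {k<..}" for k using geom_tail[of c k] c xe by simp
    have in12: "cardinal_function x p \<in> {1, 2}" if "p \<in> achievement_set x" for p
    proof -
      have "finite (representations x p)" "card (representations x p) \<le> 2"
        using atmost2[OF E] by auto
      moreover have "card (representations x p) > 0"
        using nonempty[OF that] \<open>finite (representations x p)\<close> card_gt_0_iff by blast
      ultimately have "card (representations x p) = 1 \<or> card (representations x p) = 2" by arith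
      then have "card (representations x p) \<in> {1, 2}" by blast
      then show ?thesis using cf_iff \<open>finite (representations x p)\<close> by blast
    qed
    have one: "1 \<in> cardinal_function x ` achievement_set x"
    proof -
      have "representations x 0 = {{}}"
        using rep_iff ss_zero ss_finite by auto
      moreover have "ss x {} = 0" using ss_finite[of "{}"] by simp
      then have "0 \<in> achievement_set x" using ach by auto
      ultimately have "cardinal_function x 0 = 1" "0 \<in> achievement_set x"
        unfolding cardinal_function_def by (simp_all add: one_enat_def)
      then show ?thesis by (metis image_eqI)
    qed
    have two: "2 \<in> cardinal_function x ` achievement_set x"
    proof -
      have r: "{{0}, {0<..}} \<subseteq> representations x (x 0)"
        using rep_iff ss_single E[of 0] by auto
      have d: "{0::nat} \<noteq> {0<..}" by auto
      have pin: "x 0 \<in> achievement_set x" using ach ss_single by (metis rangeI)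
      have f: "finite (representations x (x 0))" "card (representations x (x 0)) \<le> 2"
        using atmost2[OF E] by auto
      have "card {{0::nat}, {0<..}} \<le> card (representations x (x 0))" using card_mono[OF f(1) r] .
      then have "card (representations x (x 0)) = 2" using f d by simp
      then have "cardinal_function x (x 0) = 2" unfolding cardinal_function_def using f
        by (simp add: numeral_eq_enat)
      then show ?thesis using pin by (metis image_eqI)
    qed
    show "cardinal_function x ` achievement_set x = {1, 2}" using in12 one two by blast
  qed
qed

end
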